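(* Let $S$ be a commutative unital ring of positive characteristic, and let $\ell\in S$ satisfy: (i) $\ell-1$ is regular; (ii) for all positive integers $m,n$, $(\ell^m-1)\mid(\ell^n-1)$ in $S$ if and only if $m\mid n$ (in particular all positive powers of $\ell$ are distinct); (iii) $0_S$ is the only multiple of $\ell-1$ in the set $\{n\cdot 1_S: n\in\mathbb{Z}\}$. Then for every $y\in S$: (a) $y\in\operatorname{MPOW}(\ell)$ if and only if $y\in\operatorname{POW}(\ell)$ and $(\ell-1)^2\mid (y-1)$; (b) if moreover $\operatorname{char}(S)$ is a prime number, then $y\in\operatorname{PPOW}(\ell)$ if and only if $y\in\operatorname{MPOW}(\ell)$ and, for every $y'\in\operatorname{POW}(\ell)$ with $y'\neq\ell$ and $(y'-1)\mid(y-1)$, we have $y'\in\operatorname{MPOW}(\ell)$.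
   Context: An element $a\in S$ is regular if $ab=ac$ implies $b=c$. $\operatorname{POW}(\ell)=\{\ell^n:n\ge1\}$. When $\operatorname{char}(S)=c>0$: $\operatorname{MPOW}(\ell)$ is the set of powers $\ell^n$ with $n$ a positive multiple of $c$, and $\operatorname{PPOW}(\ell)$ is the set of powers $\ell^{n}$ with $n=c^k$ for some integer $k\ge1$. *)

theory Defs
  imports Main "HOL-Computational_Algebra.Primes"
begin

definition regular_elem :: "'a::comm_ring_1 \<Rightarrow> bool" where
  "regular_elem a \<longleftrightarrow> (\<forall>b c. a * b = a * c \<longrightarrow> b = c)"

definition POW :: "'a::comm_ring_1 \<Rightarrow> 'a set" where
  "POW l = {l ^ n | n. n \<ge> 1}"

definition MPOW :: "'a::comm_ring_1 \<Rightarrow> 'a set" where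
  "MPOW l = {l ^ n | n. n \<ge> 1 \<and> CHAR('a) dvd n}"

definition PPOW :: "'a::comm_ring_1 \<Rightarrow> 'a set" where
  "PPOW l = {l ^ (CHAR('a) ^ k) | k. k \<ge> 1}"

end

theory Submission
  imports Defs
begin

lemma geom_form:
  fixes l :: "'a::comm_ring_1"
  shows "\<exists>k. l ^ n - 1 = (l - 1) * (of_nat n + (l - 1) * k)"
proof (induction n)
  case 0
  show ?case by (intro exI[of _ 0]) simp
next
  case (Suc n)
  then obtain k where k: "l ^ n - 1 = (l - 1) * (of_nat n + (l - 1) * k)" by blast
  have "l ^ Suc n - 1 = l * (l ^ n - 1) + (l - 1)" by (simp add: algebra_simps)
  also have "\<dots> = ((l - 1) + 1) * ((l - 1) * (of_nat n + (l - 1) * k)) + (l - 1)"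
    by (simp add: k)
  also have "\<dots> = (l - 1) * (of_nat (Suc n) + (l - 1) * (k + of_nat n + (l - 1) * k))"
    by (simp add: algebra_simps)
  finally show ?case by blast
qed

lemma sq_dvd_iff:
  fixes l :: "'a::comm_ring_1"
  assumes reg: "regular_elem (l - 1)"
    and mult_int: "\<And>n::int. (l - 1) dvd (of_int n :: 'a) \<Longrightarrow> (of_int n :: 'a) = 0"
  shows "(l - 1)^2 dvd (l ^ n - 1) \<longleftrightarrow> CHAR('a) dvd n"
proof -
  obtain k where k: "l ^ n - 1 = (l - 1) * (of_nat n + (l - 1) * k)" using geom_form by blast
  show ?thesis
  proof
    assume "(l - 1)^2 dvd (l ^ n - 1)"
    then obtain t where t: "l ^ n - 1 = (l - 1)^2 * t" by blast
    have "(l - 1) * (of_nat n + (l - 1) * k) = (l - 1) * ((l - 1) * t)"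
      using k t by (simp add: power2_eq_square algebra_simps)
    hence "of_nat n + (l - 1) * k = (l - 1) * t" using reg unfolding regular_elem_def by blast
    hence "of_nat n = (l - 1) * (t - k)" by (simp add: algebra_simps)
    hence "(l - 1) dvd (of_int (int n) :: 'a)" by simp
    hence "(of_int (int n) :: 'a) = 0" by (rule mult_int)
    hence "(of_nat n :: 'a) = 0" by simp
    thus "CHAR('a) dvd n" by (simp add: of_nat_eq_0_iff_char_dvd)
  next
    assume "CHAR('a) dvd n"
    hence "(of_nat n :: 'a) = 0" by (simp add: of_nat_eq_0_iff_char_dvd)
    hence "l ^ n - 1 = (l - 1)^2 * k" using k by (simp add: power2_eq_square)
    thus "(l - 1)^2 dvd (l ^ n - 1)" by simp
  qed
qed

theorem lemma2p1:
  fixes l :: "'a::comm_ring_1"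
  assumes char_pos: "CHAR('a) > 0"
    and reg: "regular_elem (l - 1)"
    and dvd_iff: "\<And>m n::nat. m \<ge> 1 \<Longrightarrow> n \<ge> 1 \<Longrightarrow>
                    ((l ^ m - 1) dvd (l ^ n - 1) \<longleftrightarrow> m dvd n)"
    and mult_int: "\<And>n::int. (l - 1) dvd (of_int n :: 'a) \<Longrightarrow> (of_int n :: 'a) = 0"
  shows "(\<forall>y::'a. y \<in> MPOW l \<longleftrightarrow> (y \<in> POW l \<and> (l - 1)^2 dvd (y - 1)))
       \<and> (prime CHAR('a) \<longrightarrow>
           (\<forall>y::'a. y \<in> PPOW l \<longleftrightarrow>
              (y \<in> MPOW l \<and>
               (\<forall>y' \<in> POW l. y' \<noteq> l \<and> (y' - 1) dvd (y - 1) \<longrightarrow> y' \<in> MPOW l))))"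
proof -
  note sq = sq_dvd_iff[OF reg mult_int]
  have inj: "a = b" if "a \<ge> 1" "b \<ge> 1" "l ^ a = l ^ b" for a b :: nat
    using dvd_iff[of a b] dvd_iff[of b a] that by (auto intro: dvd_antisym)
  have A: "y \<in> MPOW l \<longleftrightarrow> (y \<in> POW l \<and> (l - 1)^2 dvd (y - 1))" for y
    unfolding MPOW_def POW_def using sq by auto
  have B: "y \<in> PPOW l \<longleftrightarrow>
              (y \<in> MPOW l \<and>
               (\<forall>y' \<in> POW l. y' \<noteq> l \<and> (y' - 1) dvd (y - 1) \<longrightarrow> y' \<in> MPOW l))"
    if p: "prime CHAR('a)" for y
  proof
    assume "y \<in> PPOW l"
    then obtain k where k: "k \<ge> 1" "y = l ^ (CHAR('a) ^ k)" unfolding PPOW_def by blast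
    have pos: "CHAR('a) ^ k \<ge> 1" using char_pos by (simp add: Suc_le_eq)
    have "CHAR('a) dvd CHAR('a) ^ k" using k(1) by (simp add: dvd_power)
    hence "y \<in> MPOW l" unfolding MPOW_def using k(2) pos by blast
    moreover have "y' \<in> MPOW l" if Y: "y' \<in> POW l" "y' \<noteq> l" "(y' - 1) dvd (y - 1)" for y'
    proof -
      obtain m where m: "m \<ge> 1" "y' = l ^ m" using Y(1) unfolding POW_def by blast
      have "m dvd CHAR('a) ^ k" using dvd_iff[OF m(1) pos] Y(3) m k by simp
      then obtain j where j: "j \<le> k" "m = CHAR('a) ^ j" using p divides_primepow_nat[of "CHAR('a)" m k] by blast
      have "j \<noteq> 0"
      proof
        assume "j = 0"
        hence "y' = l" using j(2) m(2) by simp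
        thus False using Y(2) by simp
      qed
      hence "CHAR('a) dvd m" using j(2) by (simp add: dvd_power)
      thus ?thesis unfolding MPOW_def using m by blast
    qed
    ultimately show "y \<in> MPOW l \<and>
               (\<forall>y' \<in> POW l. y' \<noteq> l \<and> (y' - 1) dvd (y - 1) \<longrightarrow> y' \<in> MPOW l)" by blast
  next
    assume H: "y \<in> MPOW l \<and>
               (\<forall>y' \<in> POW l. y' \<noteq> l \<and> (y' - 1) dvd (y - 1) \<longrightarrow> y' \<in> MPOW l)"
    then obtain n where n: "n \<ge> 1" "CHAR('a) dvd n" "y = l ^ n" unfolding MPOW_def by blast
    define p where "p = CHAR('a)"
    obtain r where r: "n = p ^ multiplicity p n * r" "\<not> p dvd r"
    proof -
      have "n \<noteq> 0" "\<not> is_unit p" using n(1) p unfolding p_def by auto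
      thus ?thesis using multiplicity_decompose'[of n p] that by blast
    qed
    have r1: "r = 1"
    proof (rule ccontr)
      assume "r \<noteq> 1"
      then obtain q where q: "prime q" "q dvd r" using prime_factor_nat by blast
      have qn: "q dvd n" using q(2) r(1) by (metis dvd_mult)
      have q1: "q \<ge> 1" using prime_gt_0_nat[OF q(1)] by simp
      have qp: "q \<noteq> p" using q(2) r(2) by blast
      have "l ^ q \<noteq> l"
      proof
        assume "l ^ q = l"
        hence "q = 1" using inj[of q 1] q1 by simp
        thus False using q by simp
      qed
      moreover have "(l ^ q - 1) dvd (y - 1)" using dvd_iff[OF q1 n(1)] qn n by simp
      moreover have "l ^ q \<in> POW l" unfolding POW_def using q1 by blast
      ultimately have "l ^ q \<in> MPOW l" using H by blast
      then obtain s where s: "s \<ge> 1" "p dvd s" "l ^ q = l ^ s" unfolding MPOW_def p_def by blast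
      have "q = s" using inj[OF q1 s(1) s(3)] .
      hence "p dvd q" using s by simp
      hence "p = q" using q p unfolding p_def by (simp add: primes_dvd_imp_eq)
      thus False using qp by simp
    qed
    have "multiplicity p n \<ge> 1"
    proof (rule ccontr)
      assume "\<not> multiplicity p n \<ge> 1"
      hence "n = r" using r(1) by (simp add: not_less_eq_eq)
      thus False using n(2) r(2) p_def by simp
    qed
    hence "y = l ^ (CHAR('a) ^ multiplicity p n)" using n(3) r(1) r1 p_def by simp
    thus "y \<in> PPOW l" unfolding PPOW_def using \<open>multiplicity p n \<ge> 1\<close> by blast
  qed
  show ?thesis
  proof (intro conjI impI allI)
    fix y show "y \<in> MPOW l \<longleftrightarrow> (y \<in> POW l \<and> (l - 1)^2 dvd (y - 1))" by (rule A)
  next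
    fix y assume p: "prime CHAR('a)"
    show "y \<in> PPOW l \<longleftrightarrow>
              (y \<in> MPOW l \<and>
               (\<forall>y' \<in> POW l. y' \<noteq> l \<and> (y' - 1) dvd (y - 1) \<longrightarrow> y' \<in> MPOW l))"
      by (rule B[OF p])
  qed
qed

end
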